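(* Let $W\subset\mathbb R^m$ be a linear subspace, $\mathcal W\subset[m]$ a sample of the determinantal measure $\mathbb P^W$, $u\in[m]$, $k\ge1$ an integer and $\gamma\in(0,1/k)$. Suppose $\xi_1,\dots,\xi_k\in W$ satisfy (i) $|\xi_i(u)|=1$ for all $i\in[k]$, and (ii) $|\langle\xi_i,\xi_j\rangle|\le\gamma\min(\|\xi_i\|^2,\|\xi_j\|^2)$ for all $i\ne j$ in $[k]$. Then \[\mathbb P^W(u\in\mathcal W)\ge\Big(1-\frac{\gamma k}{1-\gamma k}\Big)\sum_{i=1}^k\frac{1}{\|\xi_i\|^2}.\]
   Context: For a linear subspace $W\subset\mathbb R^m$ with orthogonal projection $P_W$ (an $m\times m$ matrix), the determinantal measure $\mathbb P^W$ is the probability measure on subsets $\mathcal S\subset[m]$ of size $\dim W$ given by $\mathbb P^W(\mathcal S)=\det(P_W|_{\mathcal S})$, where $P_W|_{\mathcal S}$ is the principal submatrix indexed by $\mathcal S$. *)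

theory Defs
  imports "HOL-Analysis.Analysis"
begin

text \<open>Ambient space R^m is modelled as real^'m with 'm a finite index type; [m] = UNIV.\<close>

definition orth_proj :: "(real^'m::finite) set \<Rightarrow> real^'m \<Rightarrow> real^'m" where
  "orth_proj W x = (THE y. y \<in> W \<and> (\<forall>w\<in>W. (x - y) \<bullet> w = 0))"

definition proj_matrix :: "(real^'m::finite) set \<Rightarrow> real^'m^'m" where
  "proj_matrix W = (\<chi> i j. orth_proj W (axis j 1) $ i)"

definition principal_minor :: "real^'m^'m \<Rightarrow> 'm::finite set \<Rightarrow> real" where
  "principal_minor A S =
     (\<Sum>p\<in>{p. p permutes S}. of_int (sign p) * (\<Prod>i\<in>S. A $ i $ p i))"

definition det_measure :: "(real^'m::finite) set \<Rightarrow> 'm set \<Rightarrow> real" where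
  "det_measure W S = (if card S = dim W then principal_minor (proj_matrix W) S else 0)"

definition det_prob :: "(real^'m::finite) set \<Rightarrow> ('m set \<Rightarrow> bool) \<Rightarrow> real" where
  "det_prob W E = (\<Sum>S\<in>{S. card S = dim W \<and> E S}. det_measure W S)"

end

theory Submission
  imports Defs
begin

lemma op_unique:
  assumes "subspace W" "y \<in> W" "\<And>w. w \<in> W \<Longrightarrow> (x - y) \<bullet> w = 0"
  shows "orth_proj W x = y"
  unfolding orth_proj_def
proof (rule the_equality)
  show "y \<in> W \<and> (\<forall>w\<in>W. (x - y) \<bullet> w = 0)" using assms by auto
next
  fix y' assume h: "y' \<in> W \<and> (\<forall>w\<in>W. (x - y') \<bullet> w = 0)"
  have d: "y' - y \<in> W" using h assms subspace_diff by blast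
  have "(x - y) \<bullet> (y' - y) - (x - y') \<bullet> (y' - y) = 0" using h assms(3) d by auto
  then have "(y' - y) \<bullet> (y' - y) = 0" by (simp add: inner_diff_left inner_diff_right inner_commute)
  then show "y' = y" by simp
qed

lemma op_props:
  assumes "subspace W"
  shows "orth_proj W x \<in> W" "\<And>w. w \<in> W \<Longrightarrow> (x - orth_proj W x) \<bullet> w = 0"
proof -
  obtain y z where y: "y \<in> span W" and z: "\<And>w. w \<in> span W \<Longrightarrow> orthogonal z w" and xyz: "x = y + z"
    by (metis orthogonal_subspace_decomp_exists)
  have yW: "y \<in> W" using y assms by (metis span_eq_iff)
  have "\<And>w. w \<in> W \<Longrightarrow> (x - y) \<bullet> w = 0" using z xyz by (simp add: orthogonal_def span_base)
  then have e: "orth_proj W x = y" using op_unique[OF assms yW] by blast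
  show "orth_proj W x \<in> W" using e yW by simp
  show "\<And>w. w \<in> W \<Longrightarrow> (x - orth_proj W x) \<bullet> w = 0" using e z xyz by (simp add: orthogonal_def span_base)
qed

lemma op_linear:
  assumes "subspace W"
  shows "linear (orth_proj W)"
proof (rule linearI)
  fix x y :: "real^'a"
  show "orth_proj W (x + y) = orth_proj W x + orth_proj W y"
    apply (rule op_unique[OF assms])
    using op_props[OF assms] assms subspace_add apply blast
  proof -
    fix w assume w: "w \<in> W"
    have "(x - orth_proj W x) \<bullet> w = 0" "(y - orth_proj W y) \<bullet> w = 0" using op_props(2)[OF assms] w by auto
    then show "(x + y - (orth_proj W x + orth_proj W y)) \<bullet> w = 0"
      by (simp add: algebra_simps inner_diff_left inner_add_left)
  qed
next
  fix c :: real and x :: "real^'a"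
  show "orth_proj W (c *\<^sub>R x) = c *\<^sub>R orth_proj W x"
    apply (rule op_unique[OF assms])
    using op_props[OF assms] assms subspace_scale apply blast
  proof -
    fix w assume w: "w \<in> W"
    have "(x - orth_proj W x) \<bullet> w = 0" using op_props(2)[OF assms] w by auto
    then show "(c *\<^sub>R x - c *\<^sub>R orth_proj W x) \<bullet> w = 0"
      by (simp add: inner_diff_left)
  qed
qed

lemma proj_matrix_eq: "proj_matrix W = matrix (orth_proj W)"
  unfolding proj_matrix_def matrix_def by simp

lemma proj_mult:
  assumes "subspace W"
  shows "proj_matrix W *v x = orth_proj W x"
  by (simp add: proj_matrix_eq matrix_works op_linear[OF assms])

lemma op_in: "subspace W \<Longrightarrow> x \<in> W \<Longrightarrow> orth_proj W x = x"
  by (rule op_unique) auto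

lemma op_perp: "subspace W \<Longrightarrow> (\<And>w. w \<in> W \<Longrightarrow> x \<bullet> w = 0) \<Longrightarrow> orth_proj W x = 0"
  by (rule op_unique) (auto simp: subspace_0)

definition pad :: "real^'m^'m \<Rightarrow> 'm::finite set \<Rightarrow> real^'m^'m" where
  "pad A S = (\<chi> i j. if i \<in> S then A$i$j else (if i = j then 1 else 0))"

lemma det_pad: fixes A :: "real^'m::finite^'m" shows "det (pad A S) = principal_minor A S"
proof -
  have "(\<Sum>p\<in>{p. p permutes S}. of_int (sign p) * (\<Prod>i\<in>UNIV. pad A S $ i $ p i)) = det (pad A S)"
    unfolding det_def
  proof (rule sum.mono_neutral_left)
    show "finite {p. p permutes (UNIV::'m set)}" using finite_permutations[of "UNIV::'m set"] by simp
    show "{p. p permutes S} \<subseteq> {p. p permutes (UNIV::'m set)}" by (auto intro: permutes_subset)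
    show "\<forall>p\<in>{p. p permutes UNIV} - {p. p permutes S}. of_int (sign p) * (\<Prod>i\<in>UNIV. pad A S $ i $ p i) = 0"
    proof
      fix p assume p: "p \<in> {p. p permutes (UNIV::'m set)} - {p. p permutes S}"
      then have "\<not> (\<forall>x. x \<notin> S \<longrightarrow> p x = x)" using p unfolding permutes_def by auto
      then obtain i where "i \<notin> S" "p i \<noteq> i" by blast
      then have "pad A S $ i $ p i = 0" by (simp add: pad_def)
      then have "(\<Prod>i\<in>UNIV. pad A S $ i $ p i) = 0" by (meson UNIV_I finite prod_zero)
      then show "of_int (sign p) * (\<Prod>i\<in>UNIV. pad A S $ i $ p i) = 0" by simp
    qed
  qed
  moreover have "(\<Sum>p\<in>{p. p permutes S}. of_int (sign p) * (\<Prod>i\<in>UNIV. pad A S $ i $ p i)) = principal_minor A S"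
    unfolding principal_minor_def
  proof (rule sum.cong[OF refl])
    fix p assume "p \<in> {p. p permutes S}"
    then have p: "p permutes S" by simp
    have "(\<Prod>i\<in>UNIV. pad A S $ i $ p i) = (\<Prod>i\<in>S. pad A S $ i $ p i)"
      by (rule prod.mono_neutral_right) (auto simp: pad_def permutes_not_in[OF p])
    also have "\<dots> = (\<Prod>i\<in>S. A $ i $ p i)" by (simp add: pad_def)
    finally show "of_int (sign p) * (\<Prod>i\<in>UNIV. pad A S $ i $ p i) = of_int (sign p) * (\<Prod>i\<in>S. A $ i $ p i)" by simp
  qed
  ultimately show ?thesis by simp
qed

lemma det_I_plus: "det (mat 1 + N) = (\<Sum>S\<in>(UNIV::'m::finite set set). principal_minor N S)"
proof -
  have "det (mat 1 + N) = (\<Sum>p\<in>{p. p permutes (UNIV::'m set)}. of_int (sign p) * (\<Prod>i\<in>UNIV. N $ i $ p i + (if i = p i then 1 else 0)))"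
    unfolding det_def by (simp add: mat_def add.commute)
  also have "\<dots> = (\<Sum>p\<in>{p. p permutes (UNIV::'m set)}. \<Sum>S\<in>(UNIV::'m set set). of_int (sign p) * (\<Prod>i\<in>UNIV. pad N S $ i $ p i))"
  proof (rule sum.cong[OF refl])
    fix p :: "'m \<Rightarrow> 'm"
    have "(\<Prod>i\<in>UNIV. N $ i $ p i + (if i = p i then 1 else 0)) = (\<Sum>X\<in>Pow UNIV. (\<Prod>i\<in>X. N $ i $ p i) * (\<Prod>i\<in>UNIV - X. (if i = p i then 1 else 0)))"
      by (rule prod_add) simp
    also have "\<dots> = (\<Sum>X\<in>(UNIV::'m set set). (\<Prod>i\<in>UNIV. pad N X $ i $ p i))"
    proof (rule sum.cong)
      fix X :: "'m set"
      have "(\<Prod>i\<in>UNIV. pad N X $ i $ p i) = (\<Prod>i\<in>UNIV. if i \<in> X then N $ i $ p i else (if i = p i then 1 else 0))"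
        by (simp add: pad_def)
      also have "\<dots> = (\<Prod>i\<in>X. N $ i $ p i) * (\<Prod>i\<in>UNIV - X. (if i = p i then 1 else 0))"
        by (simp add: prod.If_cases Compl_eq_Diff_UNIV)
      finally show "(\<Prod>i\<in>X. N $ i $ p i) * (\<Prod>i\<in>UNIV - X. (if i = p i then 1 else 0)) = (\<Prod>i\<in>UNIV. pad N X $ i $ p i)" by simp
    qed simp
    finally show "of_int (sign p) * (\<Prod>i\<in>UNIV. N $ i $ p i + (if i = p i then 1 else 0)) = (\<Sum>S\<in>(UNIV::'m set set). of_int (sign p) * (\<Prod>i\<in>UNIV. pad N S $ i $ p i))"
      by (simp add: sum_distrib_left)
  qed
  also have "\<dots> = (\<Sum>S\<in>(UNIV::'m set set). det (pad N S))"
    unfolding det_def by (rule sum.swap)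
  also have "\<dots> = (\<Sum>S\<in>(UNIV::'m set set). principal_minor N S)"
    by (simp add: det_pad)
  finally show ?thesis .
qed

lemma pm_scale: "principal_minor (\<chi> i j. c i * A$i$j) S = (\<Prod>i\<in>S. c i) * principal_minor A S"
  unfolding principal_minor_def
  by (simp add: sum_distrib_left prod.distrib mult_ac)

lemma pm_vanish:
  fixes W :: "(real^'m::finite) set"
  assumes W: "subspace W" and c: "card S > dim W"
  shows "principal_minor (proj_matrix W) S = 0"
proof -
  define B0 where "B0 = (\<lambda>i. axis i (1::real)) ` S"
  define f where "f = orth_proj W"
  have lf: "linear f" using op_linear[OF W] f_def by simp
  have indB0: "independent B0"
    unfolding B0_def
    by (rule independent_mono[OF independent_Basis]) (auto simp: Basis_vec_def)
  have cardB0: "card B0 = card S"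
    unfolding B0_def by (rule card_image) (auto simp: inj_on_def axis_eq_axis)
  have "\<not> inj_on f (span B0)"
  proof
    assume inj: "inj_on f (span B0)"
    have "dim (f ` B0) = dim B0" by (rule dim_image_eq[OF lf inj])
    also have "\<dots> = card S" using indB0 cardB0 dim_eq_card_independent by metis
    finally have "dim (f ` B0) = card S" .
    moreover have "f ` B0 \<subseteq> W" using op_props(1)[OF W] f_def by auto
    then have "dim (f ` B0) \<le> dim W" by (rule dim_subset)
    ultimately show False using c by simp
  qed
  then obtain x y where xy: "x \<in> span B0" "y \<in> span B0" "x \<noteq> y" "f x = f y"
    unfolding inj_on_def by blast
  define z where "z = x - y"
  have z0: "z \<noteq> 0" using xy z_def by simp
  have fz: "f z = 0" using xy z_def linear_diff[OF lf] by simp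
  have "span B0 \<subseteq> {v. \<forall>i. i \<notin> S \<longrightarrow> v $ i = 0}"
  proof (rule span_minimal)
    show "B0 \<subseteq> {v. \<forall>i. i \<notin> S \<longrightarrow> v $ i = 0}" unfolding B0_def by (auto simp: axis_def)
    show "subspace {v::real^'m. \<forall>i. i \<notin> S \<longrightarrow> v $ i = 0}" unfolding subspace_def by auto
  qed
  then have zS: "\<And>i. i \<notin> S \<Longrightarrow> z $ i = 0" using z_def xy span_diff by blast
  have Pz: "proj_matrix W *v z = 0" using fz proj_mult[OF W] f_def by simp
  have "pad (proj_matrix W) S *v z = 0"
  proof (rule vec_eq_iff[THEN iffD2], rule allI)
    fix i
    show "(pad (proj_matrix W) S *v z) $ i = 0 $ i"
    proof (cases "i \<in> S")
      case True
      then have "(pad (proj_matrix W) S *v z) $ i = (proj_matrix W *v z) $ i"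
        by (simp add: pad_def matrix_vector_mult_def)
      then show ?thesis using Pz by simp
    next
      case False
      have "(pad (proj_matrix W) S *v z) $ i = (\<Sum>j\<in>UNIV. (if i = j then 1 else 0) * z $ j)"
        using False by (simp add: pad_def matrix_vector_mult_def)
      also have "\<dots> = z $ i" by (simp add: mult_delta_left)
      finally show ?thesis using zS False by simp
    qed
  qed
  then have "\<not> inj (\<lambda>v. pad (proj_matrix W) S *v v)"
    using z0 unfolding inj_def by (metis matrix_vector_mult_0_right)
  then have "det (matrix (\<lambda>v. pad (proj_matrix W) S *v v)) = 0"
    using det_nz_iff_inj[OF matrix_vector_mul_linear] by blast
  then show ?thesis by (simp add: det_pad)
qed

lemma det_lambda:
  fixes W :: "(real^'m::finite) set"
  assumes W: "subspace W"
  shows "det (mat 1 + (t - 1) *\<^sub>R proj_matrix W) = t ^ dim W"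
proof -
  let ?P = "proj_matrix W"
  define Wp where "Wp = {x::real^'m. \<forall>w\<in>W. x \<bullet> w = 0}"
  have Wp: "subspace Wp" unfolding Wp_def subspace_def by (auto simp: inner_add_left)
  obtain B where B: "B \<subseteq> W" "pairwise orthogonal B" "\<And>x. x \<in> B \<Longrightarrow> norm x = 1"
      "independent B" "card B = dim W" "span B = W"
    using orthonormal_basis_subspace[OF W] by metis
  obtain B' where B': "B' \<subseteq> Wp" "pairwise orthogonal B'" "\<And>x. x \<in> B' \<Longrightarrow> norm x = 1"
      "independent B'" "card B' = dim Wp" "span B' = Wp"
    using orthonormal_basis_subspace[OF Wp] by metis
  define C where "C = B \<union> B'"
  have finC: "finite C" using B(4) B'(4) independent_imp_finite C_def by blast
  have orthBB': "\<And>x y. x \<in> B \<Longrightarrow> y \<in> B' \<Longrightarrow> x \<bullet> y = 0"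
  proof -
    fix x y assume "x \<in> B" "y \<in> B'"
    then have "x \<in> W" "\<forall>w\<in>W. y \<bullet> w = 0" using B(1) B'(1) Wp_def by auto
    then show "x \<bullet> y = 0" by (simp add: inner_commute)
  qed
  have disj: "B \<inter> B' = {}"
  proof (rule ccontr)
    assume "B \<inter> B' \<noteq> {}"
    then obtain x where "x \<in> B" "x \<in> B'" by blast
    then have "x \<bullet> x = 0" using orthBB' by blast
    then have "x = 0" by simp
    then show False using B(3) \<open>x \<in> B\<close> by fastforce
  qed
  have normC: "\<And>x. x \<in> C \<Longrightarrow> norm x = 1" using B(3) B'(3) C_def by blast
  have orthC: "\<And>x y. x \<in> C \<Longrightarrow> y \<in> C \<Longrightarrow> x \<noteq> y \<Longrightarrow> x \<bullet> y = 0"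
    using B(2) B'(2) orthBB' unfolding C_def pairwise_def orthogonal_def
    by (metis Un_iff inner_commute)
  have indC: "independent C"
    by (rule pairwise_orthogonal_independent) (use orthC normC in \<open>auto simp: pairwise_def orthogonal_def\<close>, metis norm_zero zero_neq_one)
  have spanC: "span C = UNIV"
  proof -
    { fix x :: "real^'m"
      have "orth_proj W x \<in> span C" using op_props(1)[OF W] B(6) C_def span_mono by blast
      moreover have "x - orth_proj W x \<in> Wp" using op_props(2)[OF W] Wp_def by auto
      then have "x - orth_proj W x \<in> span C" using B'(6) C_def span_mono by blast
      ultimately have "x \<in> span C" using span_add by fastforce }
    then show ?thesis by auto
  qed
  have cardC: "card C = CARD('m)"
  proof -
    have "dim (UNIV::(real^'m) set) = card C" using dim_eq_card[of C UNIV] indC spanC by simp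
    then show ?thesis by simp
  qed
  obtain g where g: "bij_betw g (UNIV::'m set) C"
    using finite_same_card_bij[of "UNIV::'m set" C] finC cardC by auto
  have ginC: "\<And>i. g i \<in> C" using g bij_betwE by blast
  have ginj: "\<And>i j. g i = g j \<Longrightarrow> i = j" using g by (meson bij_betw_imp_inj_on inj_onD UNIV_I)
  define U where "U = (\<chi> i j. g j $ i)"
  have gg: "g i \<bullet> g j = (if i = j then 1 else 0)" for i j
  proof (cases "i = j")
    case True
    have "g i \<bullet> g i = (norm (g i))\<^sup>2" by (simp add: power2_norm_eq_inner)
    then show ?thesis using normC[OF ginC[of i]] True by simp
  next
    case False
    then have "g i \<noteq> g j" using ginj by blast
    then show ?thesis using orthC[OF ginC ginC] False by simp
  qed
  have UU: "transpose U ** U = mat 1"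
  proof -
    have "(transpose U ** U) $ i $ j = mat 1 $ i $ j" for i j
    proof -
      have "(transpose U ** U) $ i $ j = (\<Sum>k\<in>UNIV. g i $ k * g j $ k)"
        unfolding matrix_matrix_mult_def by (simp add: transpose_def U_def)
      also have "\<dots> = g i \<bullet> g j" unfolding inner_vec_def by simp
      finally show ?thesis using gg by (simp add: mat_def)
    qed
    then show ?thesis by (simp add: vec_eq_iff)
  qed
  have detU: "det U * det U = 1"
    using arg_cong[OF UU, of det] by (simp add: det_mul)
  define M where "M = mat 1 + (t - 1) *\<^sub>R ?P"
  define mu where "mu j = (if g j \<in> B then t else 1)" for j
  have Mg: "M *v g j = mu j *\<^sub>R g j" for j
  proof -
    have "M *v g j = g j + (t - 1) *\<^sub>R orth_proj W (g j)"
      unfolding M_def matrix_vector_mult_add_rdistrib matrix_vector_mul_lid scaleR_matrix_vector_assoc[symmetric] proj_mult[OF W] ..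
    moreover have "g j \<in> B \<Longrightarrow> orth_proj W (g j) = g j" using op_in[OF W] B(1) by blast
    moreover have "g j \<notin> B \<Longrightarrow> orth_proj W (g j) = 0"
    proof -
      assume "g j \<notin> B"
      then have "g j \<in> B'" using ginC C_def by blast
      then show ?thesis using op_perp[OF W] B'(1) Wp_def by (auto simp: inner_commute)
    qed
    ultimately show ?thesis unfolding mu_def by (cases "g j \<in> B") (simp_all add: scaleR_diff_left)
  qed
  have diag: "transpose U ** (M ** U) = (\<chi> i j. if i = j then mu j else 0)"
  proof -
    have MU: "(M ** U) $ k $ j = (M *v g j) $ k" for k j
      by (simp add: matrix_matrix_mult_def matrix_vector_mult_def U_def)
    have "(transpose U ** (M ** U)) $ i $ j = (if i = j then mu j else 0)" for i j
    proof -
      have MU': "M ** U = (\<chi> k j. (mu j *\<^sub>R g j) $ k)"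
        using MU Mg by (simp add: vec_eq_iff)
      have "(transpose U ** (M ** U)) $ i $ j = (\<Sum>k\<in>UNIV. g i $ k * (mu j * g j $ k))"
        unfolding MU' by (simp add: matrix_matrix_mult_def transpose_def U_def)
      also have "\<dots> = mu j * (g i \<bullet> g j)"
        unfolding inner_vec_def by (simp add: sum_distrib_left mult_ac)
      finally show ?thesis using gg by simp
    qed
    then show ?thesis by (simp add: vec_eq_iff)
  qed
  have "det (transpose U ** (M ** U)) = det M"
    by (simp add: det_mul detU mult_ac)
  moreover have "det (transpose U ** (M ** U)) = (\<Prod>j\<in>UNIV. mu j)"
    by (simp add: diag det_diagonal)
  moreover have "(\<Prod>j\<in>UNIV. mu j) = (\<Prod>c\<in>C. if c \<in> B then t else 1)"
    unfolding mu_def by (rule prod.reindex_bij_betw[OF g])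
  moreover have "\<dots> = t ^ card B"
  proof -
    have "(\<Prod>c\<in>C. if c \<in> B then t else 1) = (\<Prod>c\<in>B. t)"
      by (rule prod.mono_neutral_cong_right) (use finC C_def in auto)
    then show ?thesis by simp
  qed
  ultimately show ?thesis using B(5) M_def by simp
qed

lemma PP:
  fixes W :: "(real^'m::finite) set"
  assumes W: "subspace W"
  shows "(\<Sum>k\<in>UNIV. proj_matrix W $ i $ k * proj_matrix W $ k $ j) = proj_matrix W $ i $ j"
proof -
  have lf: "linear (orth_proj W)" by (rule op_linear[OF W])
  have "orth_proj W \<circ> orth_proj W = orth_proj W"
  proof
    fix x show "(orth_proj W \<circ> orth_proj W) x = orth_proj W x"
      using op_in[OF W op_props(1)[OF W, of x]] by simp
  qed
  then have "proj_matrix W ** proj_matrix W = proj_matrix W"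
    using matrix_compose[OF lf lf] proj_matrix_eq[of W] by simp
  then have "(proj_matrix W ** proj_matrix W) $ i $ j = proj_matrix W $ i $ j" by simp
  then show ?thesis unfolding matrix_matrix_mult_def by simp
qed

lemma pm_single: "principal_minor A {u} = A $ u $ u"
  unfolding principal_minor_def by simp

lemma factor:
  fixes P :: "real^'m::finite^'m"
  assumes PP: "\<And>i j. (\<Sum>k\<in>UNIV. P $ i $ k * P $ k $ j) = P $ i $ j"
  shows "mat 1 + (\<chi> i j. (if i = u then -1 else t - 1) * P$i$j)
       = pad (mat 1 - P) {u} ** (mat 1 + (\<chi> i j. (t - 1) * P$i$j))"
proof -
  have "(pad (mat 1 - P) {u} ** (mat 1 + (\<chi> i j. (t - 1) * P$i$j))) $ i $ j
        = (mat 1 + (\<chi> i j. (if i = u then -1 else t - 1) * P$i$j)) $ i $ j" for i j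
  proof -
    define a where "a = (if i = u then -1 else (0::real))"
    have "(pad (mat 1 - P) {u} ** (mat 1 + (\<chi> i j. (t - 1) * P$i$j))) $ i $ j
        = (\<Sum>k\<in>UNIV. ((if i = k then 1 else 0) + a * P $ i $ k) * ((if k = j then 1 else 0) + (t - 1) * P $ k $ j))"
      unfolding matrix_matrix_mult_def pad_def a_def by (auto simp: mat_def intro!: sum.cong)
    also have "\<dots> = (\<Sum>k\<in>UNIV. (if i = k then 1 else 0) * ((if k = j then 1 else 0) + (t - 1) * P $ k $ j))
         + a * (\<Sum>k\<in>UNIV. P $ i $ k * (if k = j then 1 else 0)) + a * (t - 1) * (\<Sum>k\<in>UNIV. P $ i $ k * P $ k $ j)"
    proof -
      have "\<And>k. ((if i = k then 1 else 0) + a * P $ i $ k) * ((if k = j then 1 else 0) + (t - 1) * P $ k $ j)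
         = (if i = k then 1 else 0) * ((if k = j then 1 else 0) + (t - 1) * P $ k $ j)
           + a * (P $ i $ k * (if k = j then 1 else 0)) + a * (t - 1) * (P $ i $ k * P $ k $ j)"
        by (simp add: algebra_simps)
      then show ?thesis by (simp add: sum.distrib sum_distrib_left)
    qed
    also have "\<dots> = (if i = j then 1 else 0) + (t - 1) * P $ i $ j + a * P $ i $ j + a * (t - 1) * P $ i $ j"
      by (simp add: PP mult_delta_left mult_delta_right)
    also have "\<dots> = (mat 1 + (\<chi> i j. (if i = u then -1 else t - 1) * P$i$j)) $ i $ j"
      by (simp add: mat_def a_def algebra_simps)
    finally show ?thesis .
  qed
  then show ?thesis by (simp add: vec_eq_iff)
qed

lemma coeff_extract:
  fixes c :: "'a set \<Rightarrow> real" and q :: "'a set \<Rightarrow> real poly" and Z :: "'a set set"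
  assumes fin: "finite Z"
   and big: "\<And>S. S \<in> Z \<Longrightarrow> card S > d \<Longrightarrow> c S = 0"
   and co: "\<And>S. S \<in> Z \<Longrightarrow> card S \<le> d \<Longrightarrow> coeff (q S) d = (if card S = d then w S else 0)"
   and idt: "\<And>t. (\<Sum>S\<in>Z. c S * poly (q S) t) = K * t ^ d"
  shows "(\<Sum>S\<in>{S\<in>Z. card S = d}. c S * w S) = K"
proof -
  have "poly (\<Sum>S\<in>Z. smult (c S) (q S)) t = poly (monom K d) t" for t
    unfolding poly_sum poly_smult poly_monom using idt[of t] by simp
  then have "poly (\<Sum>S\<in>Z. smult (c S) (q S)) = poly (monom K d)" by (rule ext)
  then have eq: "(\<Sum>S\<in>Z. smult (c S) (q S)) = monom K d" by (rule poly_eq_poly_eq_iff[THEN iffD1])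
  have "K = coeff (\<Sum>S\<in>Z. smult (c S) (q S)) d" by (simp add: eq)
  also have "\<dots> = (\<Sum>S\<in>Z. c S * coeff (q S) d)" by (simp add: coeff_sum)
  also have "\<dots> = (\<Sum>S\<in>Z. if card S = d then c S * w S else 0)"
  proof (rule sum.cong[OF refl])
    fix S assume S: "S \<in> Z"
    show "c S * coeff (q S) d = (if card S = d then c S * w S else 0)"
    proof (cases "card S > d")
      case True then show ?thesis using big[OF S] by simp
    next
      case False then show ?thesis using co[OF S] by simp
    qed
  qed
  also have "\<dots> = (\<Sum>S\<in>{S\<in>Z. card S = d}. c S * w S)"
    using fin by (simp add: sum.inter_filter)
  finally show ?thesis by simp
qed

lemma lin_coeff: "n \<le> d \<Longrightarrow> coeff ([:-1, 1::real:] ^ n) d = (if n = d then 1 else 0)"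
  using coeff_linear_power[of "-1::real" n] degree_linear_power[of "-1::real" n]
  by (auto simp: coeff_eq_0)

lemma marginal:
  fixes W :: "(real^'m::finite) set"
  assumes W: "subspace W"
  shows "det_prob W (\<lambda>S. u \<in> S) = proj_matrix W $ u $ u"
proof -
  let ?P = "proj_matrix W"
  let ?d = "dim W"
  define c where "c S = principal_minor ?P S" for S
  have big: "\<And>S. card S > ?d \<Longrightarrow> c S = 0" by (simp add: c_def pm_vanish[OF W])
  have sc: "(t - 1) *\<^sub>R ?P = (\<chi> i j. (t - 1) * ?P$i$j)" for t by (simp add: vec_eq_iff)
  have I1: "det (mat 1 + (\<chi> i j. (t - 1) * ?P$i$j)) = t ^ ?d" for t
    using det_lambda[OF W, of t] sc by simp
  have I1': "(\<Sum>S\<in>UNIV. c S * poly ([:-1, 1:] ^ card S) t) = 1 * t ^ ?d" for t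
  proof -
    have "t ^ ?d = (\<Sum>S\<in>UNIV. principal_minor (\<chi> i j. (t - 1) * ?P$i$j) S)"
      using I1[of t] det_I_plus by metis
    also have "\<dots> = (\<Sum>S\<in>UNIV. c S * poly ([:-1, 1:] ^ card S) t)"
      by (rule sum.cong[OF refl]) (simp add: pm_scale c_def poly_power)
    finally show ?thesis by simp
  qed
  define q0 where "q0 S = (if u \<in> S then - ([:-1, 1:] ^ (card S - 1)) else [:-1, 1::real:] ^ card S)" for S :: "'m set"
  have I0: "(\<Sum>S\<in>UNIV. c S * poly (q0 S) t) = (1 - ?P$u$u) * t ^ ?d" for t
  proof -
    have fac: "mat 1 + (\<chi> i j. (if i = u then -1 else t - 1) * ?P$i$j)
       = pad (mat 1 - ?P) {u} ** (mat 1 + (\<chi> i j. (t - 1) * ?P$i$j))"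
      by (rule factor[OF PP[OF W]])
    have pd: "det (pad (mat 1 - ?P) {u}) = 1 - ?P$u$u"
      unfolding det_pad pm_single by (simp add: mat_def)
    have "det (mat 1 + (\<chi> i j. (if i = u then -1 else t - 1) * ?P$i$j)) = (1 - ?P$u$u) * t ^ ?d"
      unfolding fac det_mul pd I1 ..
    then have s1: "(\<Sum>S\<in>UNIV. principal_minor (\<chi> i j. (if i = u then -1 else t - 1) * ?P$i$j) S) = (1 - ?P$u$u) * t ^ ?d"
      unfolding det_I_plus .
    have lin: "poly [:-1, 1:] t = t - 1" by simp
    have s2: "principal_minor (\<chi> i j. (if i = u then -1 else t - 1) * ?P$i$j) S = c S * poly (q0 S) t" for S
    proof -
      have "principal_minor (\<chi> i j. (if i = u then -1 else t - 1) * ?P$i$j) S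
          = (\<Prod>i\<in>S. (if i = u then -1 else t - 1)) * c S"
        unfolding pm_scale c_def ..
      moreover have "(\<Prod>i\<in>S. (if i = u then -1 else t - 1)) = poly (q0 S) t"
      proof (cases "u \<in> S")
        case True
        have fS: "finite S" by simp
        have "(\<Prod>i\<in>S. (if i = u then -1 else t - 1)) = (-1) * (\<Prod>i\<in>S - {u}. (if i = u then -1 else t - 1))"
          using prod.remove[OF fS True, of "\<lambda>i. if i = u then -1 else t - 1"] by simp
        also have "(\<Prod>i\<in>S - {u}. (if i = u then -1 else t - 1)) = (\<Prod>i\<in>S - {u}. t - 1)"
          by (rule prod.cong) auto
        also have "\<dots> = (t - 1) ^ (card S - 1)" using True by simp
        finally show ?thesis using True unfolding q0_def poly_minus poly_power lin by simp
      next
        case False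
        have "(\<Prod>i\<in>S. (if i = u then -1 else t - 1)) = (\<Prod>i\<in>S. t - 1)"
          using False by (intro prod.cong) auto
        then show ?thesis using False unfolding q0_def poly_power lin by simp
      qed
      ultimately show ?thesis by simp
    qed
    show ?thesis using s1 s2 by simp
  qed
  have tot: "(\<Sum>S\<in>{S\<in>UNIV. card S = ?d}. c S * 1) = 1"
    by (rule coeff_extract[OF _ big _ I1']) (auto simp: lin_coeff)
  have comp: "(\<Sum>S\<in>{S\<in>UNIV. card S = ?d}. c S * (if u \<in> S then 0 else 1)) = 1 - ?P$u$u"
  proof (rule coeff_extract[OF _ big _ I0])
    fix S :: "'m set"
    assume le: "card S \<le> ?d"
    show "coeff (q0 S) ?d = (if card S = ?d then (if u \<in> S then 0 else 1) else 0)"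
    proof (cases "u \<in> S")
      case True
      then have "card S \<ge> 1" using card_gt_0_iff[of S] by fastforce
      then have "card S - 1 \<le> ?d" "card S - 1 \<noteq> ?d" using le by auto
      then show ?thesis using True by (simp add: q0_def lin_coeff)
    next
      case False
      then show ?thesis using le by (simp add: q0_def lin_coeff)
    qed
  qed auto
  have "det_prob W (\<lambda>S. u \<in> S) = (\<Sum>S\<in>{S. card S = ?d \<and> u \<in> S}. c S)"
    unfolding det_prob_def det_measure_def c_def by simp
  also have "\<dots> = (\<Sum>S\<in>{S\<in>UNIV. card S = ?d}. c S * (if u \<in> S then 1 else 0))"
    by (simp add: sum.inter_filter[symmetric] if_distrib cong: if_cong)
  also have "\<dots> = (\<Sum>S\<in>{S\<in>UNIV. card S = ?d}. c S * 1) - (\<Sum>S\<in>{S\<in>UNIV. card S = ?d}. c S * (if u \<in> S then 0 else 1))"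
    by (simp add: sum_subtractf[symmetric] algebra_simps if_distrib cong: if_cong)
  also have "\<dots> = ?P$u$u" using tot comp by simp
  finally show ?thesis .
qed

lemma key_cs:
  fixes W :: "(real^'m::finite) set"
  assumes W: "subspace W" and xW: "x \<in> W"
  shows "(x $ u)\<^sup>2 \<le> proj_matrix W $ u $ u * (norm x)\<^sup>2"
proof -
  define q where "q = orth_proj W (axis u 1)"
  have qW: "q \<in> W" using op_props(1)[OF W] q_def by simp
  have perp: "\<And>w. w \<in> W \<Longrightarrow> (axis u 1 - q) \<bullet> w = 0" using op_props(2)[OF W] q_def by simp
  have Puu: "proj_matrix W $ u $ u = q $ u" unfolding proj_matrix_def q_def by simp
  have "q $ u = axis u 1 \<bullet> q" by (simp add: inner_axis')
  also have "\<dots> = (axis u 1 - q) \<bullet> q + q \<bullet> q" by (simp add: inner_diff_left)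
  also have "\<dots> = (norm q)\<^sup>2" using perp[OF qW] by (simp add: power2_norm_eq_inner)
  finally have Pq: "proj_matrix W $ u $ u = (norm q)\<^sup>2" using Puu by simp
  have "x $ u = axis u 1 \<bullet> x" by (simp add: inner_axis')
  also have "\<dots> = (axis u 1 - q) \<bullet> x + q \<bullet> x" by (simp add: inner_diff_left)
  also have "\<dots> = q \<bullet> x" using perp[OF xW] by simp
  finally have "\<bar>x $ u\<bar> \<le> norm q * norm x" using Cauchy_Schwarz_ineq2[of q x] by simp
  then have "\<bar>x $ u\<bar>\<^sup>2 \<le> (norm q * norm x)\<^sup>2" by (rule power_mono) simp
  then show ?thesis using Pq by (simp add: power_mult_distrib)
qed

lemma final_arith:
  fixes A p x :: real
  assumes "0 < A" "0 < x" "x < 1" "A * A \<le> p * (A * (1 + x))"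
  shows "(1 - x / (1 - x)) * A \<le> p"
proof -
  have "A * A \<le> A * (p * (1 + x))" using assms(4) by (simp add: mult_ac)
  then have "A \<le> p * (1 + x)" using assms(1) by (simp add: mult_le_cancel_left_pos)
  then have "A / (1 + x) \<le> p" using assms(2) by (simp add: divide_le_eq)
  moreover have "(1 - x / (1 - x)) \<le> 1 / (1 + x)"
  proof -
    have "1 - x / (1 - x) = (1 - 2 * x) / (1 - x)" using assms(3) by (simp add: field_simps)
    also have "\<dots> \<le> 1 / (1 + x)" using assms(2,3) by (simp add: divide_simps) (simp add: algebra_simps power2_eq_square)
    finally show ?thesis .
  qed
  then have "(1 - x / (1 - x)) * A \<le> A / (1 + x)" using assms(1)
    by (metis mult_right_mono less_imp_le times_divide_eq_left mult_1)
  ultimately show ?thesis by simp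
qed

lemma term_bound:
  fixes a b g ip ci cj :: real
  assumes "0 < a" "0 < b" "\<bar>ci\<bar> = 1 / a" "\<bar>cj\<bar> = 1 / b" "\<bar>ip\<bar> \<le> g * min a b" "0 \<le> g"
  shows "ci * cj * ip \<le> g / b"
proof -
  have "ci * cj * ip \<le> \<bar>ci\<bar> * \<bar>cj\<bar> * \<bar>ip\<bar>" by (simp add: abs_mult[symmetric])
  also have "\<dots> \<le> (1 / a) * (1 / b) * (g * a)"
  proof -
    have "\<bar>ip\<bar> \<le> g * a" using assms(5,6) by (meson min.cobounded1 mult_left_mono order_trans)
    then show ?thesis using assms by (intro mult_mono) auto
  qed
  also have "\<dots> = g / b" using assms(1) by simp
  finally show ?thesis .
qed

theorem corollary2p13:
  fixes W :: "(real^'m::finite) set" and u :: 'm and k :: nat and \<gamma> :: real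
    and \<xi> :: "nat \<Rightarrow> real^'m"
  assumes "subspace W"
    and "k \<ge> 1"
    and "0 < \<gamma>" and "\<gamma> < 1 / real k"
    and "\<And>i. i \<in> {1..k} \<Longrightarrow> \<xi> i \<in> W"
    and "\<And>i. i \<in> {1..k} \<Longrightarrow> \<bar>\<xi> i $ u\<bar> = 1"
    and "\<And>i j. i \<in> {1..k} \<Longrightarrow> j \<in> {1..k} \<Longrightarrow> i \<noteq> j \<Longrightarrow>
           \<bar>\<xi> i \<bullet> \<xi> j\<bar> \<le> \<gamma> * min ((norm (\<xi> i))\<^sup>2) ((norm (\<xi> j))\<^sup>2)"
  shows "det_prob W (\<lambda>S. u \<in> S)
           \<ge> (1 - \<gamma> * real k / (1 - \<gamma> * real k)) * (\<Sum>i=1..k. 1 / (norm (\<xi> i))\<^sup>2)"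
proof -
  note W = assms(1)
  define K where "K = {1..k}"
  define n where "n i = (norm (\<xi> i))\<^sup>2" for i
  define A where "A = (\<Sum>i\<in>K. 1 / n i)"
  define c where "c i = \<xi> i $ u / n i" for i
  define p where "p = proj_matrix W $ u $ u"
  have npos: "0 < n i" if "i \<in> K" for i
  proof -
    have "\<xi> i \<noteq> 0" using assms(6)[of i] that K_def by auto
    then show ?thesis by (simp add: n_def)
  qed
  have Kne: "K \<noteq> {}" "finite K" using assms(2) K_def by auto
  have Apos: "0 < A" unfolding A_def using Kne npos by (intro sum_pos) auto
  have cabs: "\<bar>c i\<bar> = 1 / n i" if "i \<in> K" for i
    using assms(6)[of i] that K_def npos[OF that] by (simp add: c_def abs_divide)
  have cu: "c i * \<xi> i $ u = 1 / n i" if "i \<in> K" for i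
  proof -
    have "(\<xi> i $ u)\<^sup>2 = 1" using assms(6)[of i] that K_def by (metis abs_power2 one_power2 power2_abs)
    then show ?thesis by (simp add: c_def power2_eq_square)
  qed
  define x where "x = (\<Sum>i\<in>K. c i *\<^sub>R \<xi> i)"
  have xW: "x \<in> W" unfolding x_def
    by (rule subspace_sum[OF W]) (use assms(5) K_def subspace_scale[OF W] in auto)
  have xu: "x $ u = A" unfolding x_def A_def by (simp add: cu)
  have nx: "(norm x)\<^sup>2 = (\<Sum>i\<in>K. \<Sum>j\<in>K. c i * c j * (\<xi> i \<bullet> \<xi> j))"
    unfolding power2_norm_eq_inner x_def
    by (simp add: inner_sum_left inner_sum_right sum_distrib_left mult_ac) (subst sum.swap, simp add: mult_ac)
  have tb: "c i * c j * (\<xi> i \<bullet> \<xi> j) \<le> (if i = j then 1 / n i else 0) + \<gamma> / n j" if "i \<in> K" "j \<in> K" for i j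
  proof (cases "i = j")
    case True
    have "c i * c i * (\<xi> i \<bullet> \<xi> i) = 1 / n i"
    proof -
      have e1: "\<xi> i \<bullet> \<xi> i = n i" by (simp add: n_def power2_norm_eq_inner)
      have e2: "c i * c i = (1 / n i) * (1 / n i)" using cabs[OF that(1)] by (metis abs_mult_self_eq)
      have "(1 / n i) * (1 / n i) * n i = 1 / n i" using npos[OF that(1)] by simp
      then show ?thesis using e1 e2 by simp
    qed
    then show ?thesis using True assms(3) npos[OF that(1)] by simp
  next
    case False
    have "c i * c j * (\<xi> i \<bullet> \<xi> j) \<le> \<gamma> / n j"
      by (rule term_bound[OF npos[OF that(1)] npos[OF that(2)] cabs[OF that(1)] cabs[OF that(2)]])
         (use assms(7)[of i j] that False K_def assms(3) n_def in auto)
    then show ?thesis using False by simp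
  qed
  have "(norm x)\<^sup>2 \<le> (\<Sum>i\<in>K. \<Sum>j\<in>K. (if i = j then 1 / n i else 0) + \<gamma> / n j)"
    unfolding nx by (intro sum_mono tb)
  also have "\<dots> = (\<Sum>i\<in>K. 1 / n i + \<gamma> * A)"
  proof (rule sum.cong[OF refl])
    fix i assume i: "i \<in> K"
    have "(\<Sum>j\<in>K. (if i = j then 1 / n i else 0) + \<gamma> / n j) = (\<Sum>j\<in>K. (if i = j then 1 / n i else 0)) + (\<Sum>j\<in>K. \<gamma> / n j)"
      by (rule sum.distrib)
    also have "(\<Sum>j\<in>K. (if i = j then 1 / n i else 0)) = 1 / n i" using i Kne(2) by simp
    also have "(\<Sum>j\<in>K. \<gamma> / n j) = \<gamma> * A" unfolding A_def by (simp add: sum_distrib_left)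
    finally show "(\<Sum>j\<in>K. (if i = j then 1 / n i else 0) + \<gamma> / n j) = 1 / n i + \<gamma> * A" .
  qed
  also have "\<dots> = A + real (card K) * (\<gamma> * A)" unfolding A_def by (simp add: sum.distrib)
  also have "\<dots> = A * (1 + \<gamma> * real k)"
    using K_def by (simp add: algebra_simps)
  finally have nxb: "(norm x)\<^sup>2 \<le> A * (1 + \<gamma> * real k)" .
  have AA: "A * A \<le> p * (norm x)\<^sup>2" using key_cs[OF W xW, of u] xu p_def by (simp add: power2_eq_square)
  have p0: "0 \<le> p"
  proof (rule ccontr)
    assume "\<not> 0 \<le> p"
    then have "p * (norm x)\<^sup>2 \<le> 0" by (simp add: mult_nonpos_nonneg)
    moreover have "0 < A * A" using Apos by simp
    ultimately show False using AA by linarith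
  qed
  have "p * (norm x)\<^sup>2 \<le> p * (A * (1 + \<gamma> * real k))"
    by (rule mult_left_mono[OF nxb p0])
  then have main: "A * A \<le> p * (A * (1 + \<gamma> * real k))" using AA by linarith
  have gk: "0 < \<gamma> * real k" "\<gamma> * real k < 1"
    using assms(2,3,4) by (auto simp: field_simps)
  have "(1 - \<gamma> * real k / (1 - \<gamma> * real k)) * A \<le> p"
    by (rule final_arith[OF Apos gk main])
  moreover have "det_prob W (\<lambda>S. u \<in> S) = p" using marginal[OF W] p_def by simp
  ultimately show ?thesis unfolding A_def K_def n_def by simp
qed

end
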